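(* Let $n\ge 1$, $N=2n+1$, and let $H_N$ be the simply connected $(2n+1)$-dimensional Heisenberg group, whose Lie algebra $\mathfrak{n}$ has a basis $F_1,\dots,F_{2n},F_N$ with the only nonzero brackets $[F_i,F_{j+n}]=\delta_{ij}F_N$ for $1\le i,j\le n$ (so $[F_i,F_j]=[F_i,F_N]=[F_{i+n},F_{j+n}]=[F_{i+n},F_N]=0$). Let $g_2$ be the left-invariant Lorentzian metric with $g_2(F_1,F_1)=\cdots=g_2(F_{2n},F_{2n})=-g_2(F_N,F_N)=1$ and all other pairings of basis vectors equal to $0$. Then $g_2$ is a nilsoliton, and $(\mathfrak{n},g_2)$ admits a metric solvable extension which is an Einstein metric.
   Context: For a simply connected Lie group $G$ with Lie algebra $\mathfrak{g}$ and left-invariant pseudo-Riemannian metric $g$, $g$ is an algebraic Ricci soliton if $\mathrm{ric}=c\,\mathrm{Id}+D$ for some $c\in\mathbb{R}$ and some derivation $D$ of $\mathfrak{g}$, where $\mathrm{ric}$ is the Ricci operator ($g(\mathrm{ric}X,Y)=\mathrm{Ric}(X,Y)$); it is called a nilsoliton if $G$ is nilpotent and a solvsoliton if $G$ is solvable. A metric solvable extension of $(\mathfrak{n},g)$ is a solvable Lie algebra $\mathfrak{s}=\mathfrak{a}\oplus\mathfrak{n}$ (as vector spaces) with Lie bracket $[\cdot,\cdot]'$ and a pseudo-Riemannian inner product $\tilde g$ on $\mathfrak{s}$ such that $[\mathfrak{s},\mathfrak{s}]'=\mathfrak{n}=\mathfrak{a}^{\perp}$ (orthogonal complement w.r.t.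 $\tilde g$), $[X,Y]'=[X,Y]$ and $\tilde g(X,Y)=g(X,Y)$ for all $X,Y\in\mathfrak{n}$. Such an extension is Einstein if the corresponding left-invariant metric satisfies $\mathrm{Ric}(\tilde g)=\kappa\tilde g$ for a constant $\kappa$. *)

theory Defs
  imports Complex_Main
begin

text \<open>Finite-dimensional real Lie algebras with a fixed basis e_0,...,e_(d-1).
  Vectors are coordinate functions nat => real vanishing from index d on.
  A Lie bracket is given by structure constants C i j k ([e_i,e_j] = sum_k C i j k e_k),
  a bilinear form by its Gram matrix G i j = g(e_i,e_j).\<close>

type_synonym vec = "nat \<Rightarrow> real"

definition vsp :: "nat \<Rightarrow> vec set" where
  "vsp d = {v. \<forall>k\<ge>d. v k = 0}"

definition zvec :: vec where "zvec = (\<lambda>_. 0)"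

definition ev :: "nat \<Rightarrow> vec" where
  "ev i = (\<lambda>k. if k = i then 1 else 0)"

definition vadd :: "vec \<Rightarrow> vec \<Rightarrow> vec" where
  "vadd x y = (\<lambda>k. x k + y k)"

definition lbr :: "nat \<Rightarrow> (nat \<Rightarrow> nat \<Rightarrow> nat \<Rightarrow> real) \<Rightarrow> vec \<Rightarrow> vec \<Rightarrow> vec" where
  "lbr d C x y = (\<lambda>k. if k < d then (\<Sum>i<d. \<Sum>j<d. x i * y j * C i j k) else 0)"

definition bil :: "nat \<Rightarrow> (nat \<Rightarrow> nat \<Rightarrow> real) \<Rightarrow> vec \<Rightarrow> vec \<Rightarrow> real" where
  "bil d G x y = (\<Sum>i<d. \<Sum>j<d. x i * G i j * y j)"

definition mat_app :: "nat \<Rightarrow> (nat \<Rightarrow> nat \<Rightarrow> real) \<Rightarrow> vec \<Rightarrow> vec" where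
  "mat_app d M x = (\<lambda>k. if k < d then (\<Sum>j<d. M k j * x j) else 0)"

definition is_lie_algebra :: "nat \<Rightarrow> (nat \<Rightarrow> nat \<Rightarrow> nat \<Rightarrow> real) \<Rightarrow> bool" where
  "is_lie_algebra d C \<longleftrightarrow>
     (\<forall>x\<in>vsp d. lbr d C x x = zvec) \<and>
     (\<forall>x\<in>vsp d. \<forall>y\<in>vsp d. \<forall>z\<in>vsp d.
        vadd (vadd (lbr d C x (lbr d C y z)) (lbr d C y (lbr d C z x))) (lbr d C z (lbr d C x y)) = zvec)"

definition pseudo_inner :: "nat \<Rightarrow> (nat \<Rightarrow> nat \<Rightarrow> real) \<Rightarrow> bool" where
  "pseudo_inner d G \<longleftrightarrow> (\<forall>i j. G i j = G j i) \<and>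
     (\<forall>x\<in>vsp d. (\<forall>y\<in>vsp d. bil d G x y = 0) \<longrightarrow> x = zvec)"

definition brspan :: "nat \<Rightarrow> (nat \<Rightarrow> nat \<Rightarrow> nat \<Rightarrow> real) \<Rightarrow> vec set \<Rightarrow> vec set \<Rightarrow> vec set" where
  "brspan d C A B = {v. \<exists>(m::nat) (xs::nat \<Rightarrow> vec) (ys::nat \<Rightarrow> vec). (\<forall>i<m. xs i \<in> A \<and> ys i \<in> B) \<and>
       v = (\<lambda>k. \<Sum>i<m. lbr d C (xs i) (ys i) k)}"

primrec lcs :: "nat \<Rightarrow> (nat \<Rightarrow> nat \<Rightarrow> nat \<Rightarrow> real) \<Rightarrow> nat \<Rightarrow> vec set" where
  "lcs d C 0 = vsp d"
| "lcs d C (Suc k) = brspan d C (vsp d) (lcs d C k)"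

primrec dsr :: "nat \<Rightarrow> (nat \<Rightarrow> nat \<Rightarrow> nat \<Rightarrow> real) \<Rightarrow> nat \<Rightarrow> vec set" where
  "dsr d C 0 = vsp d"
| "dsr d C (Suc k) = brspan d C (dsr d C k) (dsr d C k)"

definition nilpotent_la :: "nat \<Rightarrow> (nat \<Rightarrow> nat \<Rightarrow> nat \<Rightarrow> real) \<Rightarrow> bool" where
  "nilpotent_la d C \<longleftrightarrow> (\<exists>k. lcs d C k = {zvec})"

definition solvable_la :: "nat \<Rightarrow> (nat \<Rightarrow> nat \<Rightarrow> nat \<Rightarrow> real) \<Rightarrow> bool" where
  "solvable_la d C \<longleftrightarrow> (\<exists>k. dsr d C k = {zvec})"

text \<open>Levi-Civita connection of the left-invariant metric (Koszul formula)\<close>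
definition nabla :: "nat \<Rightarrow> (nat \<Rightarrow> nat \<Rightarrow> nat \<Rightarrow> real) \<Rightarrow> (nat \<Rightarrow> nat \<Rightarrow> real) \<Rightarrow> vec \<Rightarrow> vec \<Rightarrow> vec" where
  "nabla d C G X Y = (THE v. v \<in> vsp d \<and> (\<forall>Z\<in>vsp d.
      2 * bil d G v Z = bil d G (lbr d C X Y) Z - bil d G (lbr d C Y Z) X + bil d G (lbr d C Z X) Y))"

definition curv :: "nat \<Rightarrow> (nat \<Rightarrow> nat \<Rightarrow> nat \<Rightarrow> real) \<Rightarrow> (nat \<Rightarrow> nat \<Rightarrow> real) \<Rightarrow> vec \<Rightarrow> vec \<Rightarrow> vec \<Rightarrow> vec" where
  "curv d C G X Y Z = (\<lambda>k. nabla d C G X (nabla d C G Y Z) k - nabla d C G Y (nabla d C G X Z) k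
                          - nabla d C G (lbr d C X Y) Z k)"

definition ricci :: "nat \<Rightarrow> (nat \<Rightarrow> nat \<Rightarrow> nat \<Rightarrow> real) \<Rightarrow> (nat \<Rightarrow> nat \<Rightarrow> real) \<Rightarrow> vec \<Rightarrow> vec \<Rightarrow> real" where
  "ricci d C G X Y = (\<Sum>k<d. curv d C G (ev k) X Y k)"

definition ricci_op :: "nat \<Rightarrow> (nat \<Rightarrow> nat \<Rightarrow> nat \<Rightarrow> real) \<Rightarrow> (nat \<Rightarrow> nat \<Rightarrow> real) \<Rightarrow> vec \<Rightarrow> vec" where
  "ricci_op d C G X = (THE v. v \<in> vsp d \<and> (\<forall>Y\<in>vsp d. bil d G v Y = ricci d C G X Y))"

definition is_derivation :: "nat \<Rightarrow> (nat \<Rightarrow> nat \<Rightarrow> nat \<Rightarrow> real) \<Rightarrow> (nat \<Rightarrow> nat \<Rightarrow> real) \<Rightarrow> bool" where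
  "is_derivation d C M \<longleftrightarrow> (\<forall>x\<in>vsp d. \<forall>y\<in>vsp d.
      mat_app d M (lbr d C x y) = vadd (lbr d C (mat_app d M x) y) (lbr d C x (mat_app d M y)))"

definition algebraic_ricci_soliton :: "nat \<Rightarrow> (nat \<Rightarrow> nat \<Rightarrow> nat \<Rightarrow> real) \<Rightarrow> (nat \<Rightarrow> nat \<Rightarrow> real) \<Rightarrow> bool" where
  "algebraic_ricci_soliton d C G \<longleftrightarrow> is_lie_algebra d C \<and> pseudo_inner d G \<and>
     (\<exists>c M. is_derivation d C M \<and>
        (\<forall>X\<in>vsp d. ricci_op d C G X = (\<lambda>k. c * X k + mat_app d M X k)))"

definition nilsoliton :: "nat \<Rightarrow> (nat \<Rightarrow> nat \<Rightarrow> nat \<Rightarrow> real) \<Rightarrow> (nat \<Rightarrow> nat \<Rightarrow> real) \<Rightarrow> bool" where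
  "nilsoliton d C G \<longleftrightarrow> nilpotent_la d C \<and> algebraic_ricci_soliton d C G"

definition einstein :: "nat \<Rightarrow> (nat \<Rightarrow> nat \<Rightarrow> nat \<Rightarrow> real) \<Rightarrow> (nat \<Rightarrow> nat \<Rightarrow> real) \<Rightarrow> bool" where
  "einstein d C G \<longleftrightarrow> (\<exists>\<kappa>::real. \<forall>X\<in>vsp d. \<forall>Y\<in>vsp d. ricci d C G X Y = \<kappa> * bil d G X Y)"

text \<open>Metric solvable extension s = a (+) n of (n,C,G): n = span of e_0..e_(d-1),
  a = span of e_d..e_(d+m-1); new bracket C', new inner product G'.\<close>
definition metric_solvable_extension ::
  "nat \<Rightarrow> (nat \<Rightarrow> nat \<Rightarrow> nat \<Rightarrow> real) \<Rightarrow> (nat \<Rightarrow> nat \<Rightarrow> real) \<Rightarrow>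
   nat \<Rightarrow> (nat \<Rightarrow> nat \<Rightarrow> nat \<Rightarrow> real) \<Rightarrow> (nat \<Rightarrow> nat \<Rightarrow> real) \<Rightarrow> bool" where
  "metric_solvable_extension d C G m C' G' \<longleftrightarrow>
     is_lie_algebra (d + m) C' \<and> solvable_la (d + m) C' \<and> pseudo_inner (d + m) G' \<and>
     brspan (d + m) C' (vsp (d + m)) (vsp (d + m)) = vsp d \<and>
     {x \<in> vsp (d + m). \<forall>y\<in>{v \<in> vsp (d + m). \<forall>k<d. v k = 0}. bil (d + m) G' x y = 0} = vsp d \<and>
     (\<forall>x\<in>vsp d. \<forall>y\<in>vsp d. lbr (d + m) C' x y = lbr d C x y) \<and>
     (\<forall>x\<in>vsp d. \<forall>y\<in>vsp d. bil (d + m) G' x y = bil d G x y)"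

text \<open>Heisenberg algebra of dim 2n+1: F_i = e_(i-1), F_N = e_(2n);
  [F_i, F_(i+n)] = F_N for 1 <= i <= n.\<close>
definition heis_C :: "nat \<Rightarrow> nat \<Rightarrow> nat \<Rightarrow> nat \<Rightarrow> real" where
  "heis_C n i j k = (if k = 2 * n \<and> i < n \<and> j = i + n then 1
                     else if k = 2 * n \<and> j < n \<and> i = j + n then -1 else 0)"

definition heis_g2 :: "nat \<Rightarrow> nat \<Rightarrow> nat \<Rightarrow> real" where
  "heis_g2 n i j = (if i = j \<and> i < 2 * n then 1 else if i = j \<and> i = 2 * n then -1 else 0)"

end

theory Submission
  imports Defs
begin


lemma sum_split2: "(\<Sum>k<2*n. f k) = (\<Sum>i<n. f i + f (i+n))" for f :: "nat \<Rightarrow> real"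
proof -
  have 1: "{..<2*n} = {..<n} \<union> {n..<n+n}" by (auto simp: mult_2)
  have 2: "sum f ({..<n} \<union> {n..<n+n}) = sum f {..<n} + sum f {n..<n+n}"
    by (rule sum.union_disjoint) auto
  have 3: "sum f {0+n..<n+n} = (\<Sum>i\<in>{0..<n}. f (i+n))" by (rule sum.shift_bounds_nat_ivl)
  have 4: "(\<Sum>i<n. f i + f (i+n)) = sum f {..<n} + (\<Sum>i<n. f (i+n))" by (rule sum.distrib)
  show ?thesis using 1 2 3 4 by (simp add: atLeast0LessThan)
qed

lemma bil_diag:
  assumes "\<forall>i j. i \<noteq> j \<longrightarrow> G i j = 0"
  shows "bil d G x y = (\<Sum>i<d. x i * G i i * y i)"
  unfolding bil_def
proof (rule sum.cong[OF refl])
  fix i assume "i \<in> {..<d}"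
  have "(\<Sum>j<d. x i * G i j * y j) = (\<Sum>j<d. if j = i then x i * G i i * y i else 0)"
    by (rule sum.cong) (use assms in auto)
  also have "\<dots> = x i * G i i * y i" using \<open>i \<in> {..<d}\<close> by simp
  finally show "(\<Sum>j<d. x i * G i j * y j) = x i * G i i * y i" .
qed

lemma bil_minus1: "bil d G (\<lambda>k. u k - v k) y = bil d G u y - bil d G v y"
  unfolding bil_def by (simp add: algebra_simps sum_subtractf)

lemma the_bil_unique:
  assumes pi: "pseudo_inner d G" and v: "v \<in> vsp d" and h: "\<forall>Z\<in>vsp d. bil d G v Z = F Z"
  shows "(THE w. w \<in> vsp d \<and> (\<forall>Z\<in>vsp d. bil d G w Z = F Z)) = v"
proof (rule the_equality)
  show "v \<in> vsp d \<and> (\<forall>Z\<in>vsp d. bil d G v Z = F Z)" using v h by simp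
next
  fix w assume w: "w \<in> vsp d \<and> (\<forall>Z\<in>vsp d. bil d G w Z = F Z)"
  have "(\<lambda>k. w k - v k) \<in> vsp d" using w v by (simp add: vsp_def)
  moreover have "\<forall>Z\<in>vsp d. bil d G (\<lambda>k. w k - v k) Z = 0"
    using w h by (simp add: bil_minus1)
  ultimately have "(\<lambda>k. w k - v k) = zvec" using pi unfolding pseudo_inner_def by blast
  then have "\<forall>k. w k - v k = 0" by (simp add: zvec_def fun_eq_iff)
  then show "w = v" by (simp add: fun_eq_iff)
qed

lemma the_bil_unique2:
  assumes pi: "pseudo_inner d G" and v: "v \<in> vsp d" and h: "\<forall>Z\<in>vsp d. 2 * bil d G v Z = F Z"
  shows "(THE w. w \<in> vsp d \<and> (\<forall>Z\<in>vsp d. 2 * bil d G w Z = F Z)) = v"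
proof (rule the_equality)
  show "v \<in> vsp d \<and> (\<forall>Z\<in>vsp d. 2 * bil d G v Z = F Z)" using v h by simp
next
  fix w assume w: "w \<in> vsp d \<and> (\<forall>Z\<in>vsp d. 2 * bil d G w Z = F Z)"
  have "(\<lambda>k. w k - v k) \<in> vsp d" using w v by (simp add: vsp_def)
  moreover have "\<forall>Z\<in>vsp d. bil d G (\<lambda>k. w k - v k) Z = 0"
  proof
    fix Z assume "Z \<in> vsp d"
    then have "2 * bil d G w Z = 2 * bil d G v Z" using w h by simp
    then show "bil d G (\<lambda>k. w k - v k) Z = 0" by (simp add: bil_minus1)
  qed
  ultimately have "(\<lambda>k. w k - v k) = zvec" using pi unfolding pseudo_inner_def by blast
  then have "\<forall>k. w k - v k = 0" by (simp add: zvec_def fun_eq_iff)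
  then show "w = v" by (simp add: fun_eq_iff)
qed

lemma pseudo_inner_diag:
  assumes "\<And>i j. i \<noteq> j \<Longrightarrow> G i j = 0" "\<And>i j. G i j = G j i" "\<And>i. i < d \<Longrightarrow> G i i \<noteq> 0"
  shows "pseudo_inner d G"
  unfolding pseudo_inner_def
proof (intro conjI allI ballI impI)
  fix i j show "G i j = G j i" by (rule assms(2))
next
  fix x assume x: "x \<in> vsp d" and h: "\<forall>y\<in>vsp d. bil d G x y = 0"
  show "x = zvec"
  proof
    fix k show "x k = zvec k"
    proof (cases "k < d")
      case True
      have "ev k \<in> vsp d" using True by (simp add: vsp_def ev_def)
      then have "0 = bil d G x (ev k)" using h by simp

      also have "\<dots> = (\<Sum>i<d. if i = k then x k * G k k else 0)"
      proof -
        have g0: "\<forall>i j. i \<noteq> j \<longrightarrow> G i j = 0" using assms(1) by blast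
        show ?thesis unfolding bil_diag[OF g0]
          by (rule sum.cong) (simp_all add: ev_def)
      qed
      also have "\<dots> = x k * G k k" using True by simp
      finally show ?thesis using assms(3)[OF True] by (simp add: zvec_def)
    next
      case False then show ?thesis using x by (simp add: vsp_def zvec_def)
    qed
  qed
qed



definition om :: "nat \<Rightarrow> vec \<Rightarrow> vec \<Rightarrow> real" where
  "om n x y = (\<Sum>i<n. x i * y (i+n) - x (i+n) * y i)"
definition gV :: "nat \<Rightarrow> vec \<Rightarrow> vec \<Rightarrow> real" where
  "gV n x y = (\<Sum>i<n. x i * y i + x (i+n) * y (i+n))"
definition Jm :: "nat \<Rightarrow> vec \<Rightarrow> vec" where
  "Jm n x = (\<lambda>k. if k < n then - x (k+n) else if k < 2*n then x (k-n) else 0)"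

lemma Jm_lo[simp]: "k < n \<Longrightarrow> Jm n x k = - x (k+n)" by (simp add: Jm_def)
lemma Jm_hi[simp]: "i < n \<Longrightarrow> Jm n x (i+n) = x i" by (simp add: Jm_def)
lemma Jm_ge[simp]: "2*n \<le> k \<Longrightarrow> Jm n x k = 0" by (simp add: Jm_def)

lemma om_cong: "(\<And>k. k < 2*n \<Longrightarrow> x k = x' k) \<Longrightarrow> (\<And>k. k < 2*n \<Longrightarrow> y k = y' k) \<Longrightarrow> om n x y = om n x' y'"
  unfolding om_def by (rule sum.cong) auto
lemma gV_cong: "(\<And>k. k < 2*n \<Longrightarrow> x k = x' k) \<Longrightarrow> (\<And>k. k < 2*n \<Longrightarrow> y k = y' k) \<Longrightarrow> gV n x y = gV n x' y'"
  unfolding gV_def by (rule sum.cong) auto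

lemma om_Jr: "om n x (Jm n y) = gV n x y"
  unfolding om_def gV_def by (rule sum.cong) auto
lemma om_Jl: "om n (Jm n x) y = - gV n x y"
  unfolding om_def gV_def by (simp add: sum_negf[symmetric], (rule sum.cong, auto simp: algebra_simps)?)
lemma gV_Jl: "gV n (Jm n x) y = om n x y"
  unfolding om_def gV_def by (rule sum.cong) auto
lemma gV_Jr: "gV n x (Jm n y) = - om n x y"
  unfolding om_def gV_def by (simp add: sum_negf[symmetric], (rule sum.cong, auto simp: algebra_simps)?)
lemma om_anti: "om n x y = - om n y x"
  unfolding om_def by (simp add: sum_negf[symmetric], (rule sum.cong, auto simp: algebra_simps)?)
lemma gV_sym: "gV n x y = gV n y x"
  unfolding gV_def by (rule sum.cong) (auto simp: algebra_simps)
lemma om_self[simp]: "om n x x = 0"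
  using om_anti[of n x x] by simp

lemma om_ev_lo: "k < n \<Longrightarrow> om n (ev k) y = y (k+n)"
proof -
  assume k: "k < n"
  have "om n (ev k) y = (\<Sum>i<n. if i = k then y (k+n) else 0)"
    unfolding om_def by (rule sum.cong) (use k in \<open>auto simp: ev_def\<close>)
  then show ?thesis using k by simp
qed
lemma om_ev_hi: "k < n \<Longrightarrow> om n (ev (k+n)) y = - y k"
proof -
  assume k: "k < n"
  have "om n (ev (k+n)) y = (\<Sum>i<n. if i = k then - y k else 0)"
    unfolding om_def by (rule sum.cong) (auto simp: ev_def)
  then show ?thesis using k by simp
qed
lemma om_ev_ge: "2*n \<le> k \<Longrightarrow> om n (ev k) y = 0"
  unfolding om_def by (rule sum.neutral) (auto simp: ev_def)
lemma om_ge_r: "(\<And>k. k < 2*n \<Longrightarrow> y k = 0) \<Longrightarrow> om n x y = 0"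
  unfolding om_def by (rule sum.neutral) auto
lemma om_ge_l: "(\<And>k. k < 2*n \<Longrightarrow> x k = 0) \<Longrightarrow> om n x y = 0"
  unfolding om_def by (rule sum.neutral) auto

lemma heisC_z: "heis_C n i j (2*n) = (if j = i+n \<and> i<n then 1 else 0) - (if i = j+n \<and> j < n then 1 else 0)"
  unfolding heis_C_def by auto

lemma sum_split21: "(\<Sum>k<2*n+1. f k) = (\<Sum>i<n. f i + f (i+n)) + f (2*n)" for f :: "nat \<Rightarrow> real"
  by (simp add: sum_split2[symmetric])
lemma sum_split22: "(\<Sum>k<2*n+2. f k) = (\<Sum>i<n. f i + f (i+n)) + f (2*n) + f (2*n+1)" for f :: "nat \<Rightarrow> real"
  by (simp add: sum_split2[symmetric] numeral_2_eq_2)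

lemma lbr_heis: "lbr (2*n+1) (heis_C n) x y = (\<lambda>k. if k = 2*n then om n x y else 0)"
proof (rule ext)
  fix k
  show "lbr (2*n+1) (heis_C n) x y k = (if k = 2*n then om n x y else 0)"
  proof (cases "k = 2*n")
    case False
    then show ?thesis unfolding lbr_def heis_C_def by auto
  next
    case True
    have inner: "(\<Sum>j<2*n+1. x i * y j * heis_C n i j (2*n)) =
       (if i < n then x i * y (i+n) else 0) - (if n \<le> i \<and> i < 2*n then x i * y (i-n) else 0)" for i
    proof -
      have "(\<Sum>j<2*n+1. x i * y j * heis_C n i j (2*n)) =
        (\<Sum>j<2*n+1. (if j = i+n then (if i < n then x i * y (i+n) else 0) else 0)) -
        (\<Sum>j<2*n+1. (if j = i-n then (if n \<le> i \<and> i < 2*n then x i * y (i-n) else 0) else 0))"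
        unfolding sum_subtractf[symmetric] heisC_z by (rule sum.cong) auto
      also have "\<dots> = (if i < n then x i * y (i+n) else 0) - (if n \<le> i \<and> i < 2*n then x i * y (i-n) else 0)"
        by auto
      finally show ?thesis .
    qed
    have "lbr (2*n+1) (heis_C n) x y k = (\<Sum>i<2*n+1. (if i < n then x i * y (i+n) else 0) - (if n \<le> i \<and> i < 2*n then x i * y (i-n) else 0))"
      unfolding lbr_def using True inner by simp
    also have "\<dots> = om n x y" unfolding sum_split21 om_def
      by (simp, (rule sum.cong, auto)?)
    finally show ?thesis using True by simp
  qed
qed

lemma heis_g2_diag: "\<forall>i j. i \<noteq> j \<longrightarrow> heis_g2 n i j = 0" by (simp add: heis_g2_def)

lemma bil_heis: "bil (2*n+1) (heis_g2 n) x y = gV n x y - x (2*n) * y (2*n)"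
  unfolding bil_diag[OF heis_g2_diag] sum_split21 gV_def heis_g2_def
  by (simp, (rule sum.cong, auto)?)


lemma gV_lin_l: "gV n (\<lambda>k. a * u k + b * v k) y = a * gV n u y + b * gV n v y"
  unfolding gV_def by (simp add: sum_distrib_left sum.distrib[symmetric] algebra_simps)
lemma gV_scale_l: "gV n (\<lambda>k. a * u k) y = a * gV n u y"
  unfolding gV_def by (simp add: sum_distrib_left algebra_simps)
lemma om_lin_l: "om n (\<lambda>k. a * u k + b * v k) y = a * om n u y + b * om n v y"
  unfolding om_def by (simp add: sum_distrib_left sum.distrib[symmetric] sum_subtractf[symmetric] algebra_simps)
lemma om_lin_r: "om n x (\<lambda>k. a * u k + b * v k) = a * om n x u + b * om n x v"
  unfolding om_def by (simp add: sum_distrib_left sum.distrib[symmetric] sum_subtractf[symmetric] algebra_simps)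
lemma om_scale_l: "om n (\<lambda>k. a * u k) y = a * om n u y"
  unfolding om_def by (simp add: sum_distrib_left sum_subtractf[symmetric] algebra_simps)
lemma om_scale_r: "om n x (\<lambda>k. a * u k) = a * om n x u"
  unfolding om_def by (simp add: sum_distrib_left sum_subtractf[symmetric] algebra_simps)
lemma gV_zero_l: "(\<And>k. k < 2*n \<Longrightarrow> x k = 0) \<Longrightarrow> gV n x y = 0"
  unfolding gV_def by (rule sum.neutral) auto



definition NH :: "nat \<Rightarrow> vec \<Rightarrow> vec \<Rightarrow> vec" where
  "NH n X Y = (\<lambda>k. if k = 2*n then om n X Y / 2 else if k < 2*n then
       X (2*n) * Jm n Y k / 2 + Y (2*n) * Jm n X k / 2 else 0)"

lemma ev_same[simp]: "ev k k = 1" by (simp add: ev_def)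
lemma ev_other[simp]: "j \<noteq> k \<Longrightarrow> ev k j = 0" by (simp add: ev_def)
lemma Jm_ez[simp]: "Jm n (\<lambda>j. if j = 2*n then c else 0) = (\<lambda>k. 0)"
  by (rule ext) (auto simp: Jm_def)
lemma Jm_evz[simp]: "Jm n (ev (2*n)) = (\<lambda>k. 0)"
  by (rule ext) (simp add: Jm_def)

lemma pi_heis: "pseudo_inner (2*n+1) (heis_g2 n)"
  by (rule pseudo_inner_diag) (auto simp: heis_g2_def)

lemma NH_vsp: "NH n X Y \<in> vsp (2*n+1)"
  by (simp add: vsp_def NH_def)

lemma koszul_heis:
  assumes "Z \<in> vsp (2*n+1)"
  shows "2 * bil (2*n+1) (heis_g2 n) (NH n X Y) Z =
     bil (2*n+1) (heis_g2 n) (lbr (2*n+1) (heis_C n) X Y) Z -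
     bil (2*n+1) (heis_g2 n) (lbr (2*n+1) (heis_C n) Y Z) X +
     bil (2*n+1) (heis_g2 n) (lbr (2*n+1) (heis_C n) Z X) Y"
proof -
  have g0: "gV n (\<lambda>k. if k = 2*n then c else 0) w = 0" for c w by (rule gV_zero_l) auto
  have "gV n (NH n X Y) Z = gV n (\<lambda>k. (X (2*n) / 2) * Jm n Y k + (Y (2*n) / 2) * Jm n X k) Z"
    by (rule gV_cong) (auto simp: NH_def)
  also have "\<dots> = X (2*n) / 2 * om n Y Z + Y (2*n) / 2 * om n X Z"
    by (subst gV_lin_l) (simp add: gV_Jl)
  finally have a: "gV n (NH n X Y) Z = X (2*n) / 2 * om n Y Z + Y (2*n) / 2 * om n X Z" .
  show ?thesis
    unfolding bil_heis lbr_heis g0 a using om_anti[of n Z X]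
    by (simp add: NH_def algebra_simps)
qed

lemma nabla_heis:
  assumes "X \<in> vsp (2*n+1)" "Y \<in> vsp (2*n+1)"
  shows "nabla (2*n+1) (heis_C n) (heis_g2 n) X Y = NH n X Y"
  unfolding nabla_def
  by (rule the_bil_unique2[OF pi_heis NH_vsp], intro ballI, rule koszul_heis)

lemma ev_vsp: "k < d \<Longrightarrow> ev k \<in> vsp d" by (simp add: vsp_def ev_def)
lemma lbr_vsp: "lbr d C x y \<in> vsp d" by (simp add: vsp_def lbr_def)

lemma NH_diag: "k < 2*n+1 \<Longrightarrow> NH n (ev k) V k = 0"
  by (cases "k < n") (auto simp: NH_def Jm_def om_ev_ge)

lemma NH2_lo: "i < n \<Longrightarrow> NH n X (NH n (ev i) Y) i = -(X(2*n)*Y(2*n))/4 - X(i+n)*Y(i+n)/4"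
  by (simp add: NH_def om_ev_lo)
lemma NH2_hi: "i < n \<Longrightarrow> NH n X (NH n (ev (i+n)) Y) (i+n) = -(X(2*n)*Y(2*n))/4 - X i*Y i/4"
  by (simp add: NH_def om_ev_hi)
lemma NHz: "NH n X V (2*n) = om n X V / 2" by (simp add: NH_def)
lemma NH2_z: "NH n X (NH n (ev (2*n)) Y) (2*n) = gV n X Y / 4"
proof -
  have "om n X (NH n (ev (2*n)) Y) = om n X (\<lambda>k. (1/2) * Jm n Y k)"
    by (rule om_cong) (auto simp: NH_def Jm_def om_ev_ge)
  also have "\<dots> = 1/2 * gV n X Y" by (subst om_scale_r) (simp add: om_Jr)
  finally have "om n X (NH n (ev (2*n)) Y) = 1/2 * gV n X Y" .
  then show ?thesis unfolding NHz[of n X "NH n (ev (2*n)) Y"] by simp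
qed
lemma NH3: "k < 2*n \<Longrightarrow> NH n (\<lambda>j. if j = 2*n then c else 0) Y k = c * Jm n Y k / 2"
  by (simp add: NH_def Jm_def)
lemma NH3z: "NH n (\<lambda>j. if j = 2*n then c else 0) Y (2*n) = 0"
  by (simp add: NH_def om_ge_l)

lemma ricci_heis:
  assumes X: "X \<in> vsp (2*n+1)" and Y: "Y \<in> vsp (2*n+1)"
  shows "ricci (2*n+1) (heis_C n) (heis_g2 n) X Y = gV n X Y / 2 + n * (X (2*n) * Y (2*n)) / 2"
proof -
  let ?T = "\<lambda>k. NH n (ev k) (NH n X Y) k - NH n X (NH n (ev k) Y) k
               - NH n (\<lambda>j. if j = 2*n then om n (ev k) X else 0) Y k"
  have "ricci (2*n+1) (heis_C n) (heis_g2 n) X Y = (\<Sum>k<2*n+1. ?T k)"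
    unfolding ricci_def
  proof (rule sum.cong[OF refl])
    fix k assume "k \<in> {..<2*n+1}"
    then have e: "ev k \<in> vsp (2*n+1)" by (simp add: ev_vsp)
    show "curv (2*n+1) (heis_C n) (heis_g2 n) (ev k) X Y k = ?T k"
      unfolding curv_def nabla_heis[OF X Y] nabla_heis[OF e NH_vsp] nabla_heis[OF e Y]
        nabla_heis[OF X NH_vsp] nabla_heis[OF lbr_vsp Y] unfolding lbr_heis ..
  qed
  also have "\<dots> = (\<Sum>i<n. ?T i + ?T (i+n)) + ?T (2*n)" by (rule sum_split21)
  also have "\<dots> = (\<Sum>i<n. X(2*n)*Y(2*n)/2 + 3/4 * (X i * Y i + X (i+n) * Y (i+n))) - gV n X Y / 4"
    by (simp add: NH_diag NH2_lo NH2_hi NH2_z NH3 NH3z om_ev_lo om_ev_hi om_ev_ge,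
        rule sum.cong, auto simp: algebra_simps)
  also have "\<dots> = n * (X(2*n)*Y(2*n)/2) + 3/4 * gV n X Y - gV n X Y / 4"
    by (simp only: sum.distrib sum_constant card_lessThan sum_distrib_left[symmetric] gV_def)
  also have "\<dots> = gV n X Y / 2 + n * (X (2*n) * Y (2*n)) / 2"
    by (simp add: algebra_simps)
  finally show ?thesis .
qed



lemma lie_heis: "is_lie_algebra (2*n+1) (heis_C n)"
  unfolding is_lie_algebra_def
proof (intro conjI ballI)
  fix x assume "x \<in> vsp (2*n+1)"
  show "lbr (2*n+1) (heis_C n) x x = zvec" unfolding lbr_heis zvec_def by (rule ext) (simp add: om_self)
next
  fix x y z
  have oz: "om n a (\<lambda>k. if k = 2*n then c else 0) = 0" for a c by (rule om_ge_r) auto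
  show "vadd (vadd (lbr (2*n+1) (heis_C n) x (lbr (2*n+1) (heis_C n) y z))
               (lbr (2*n+1) (heis_C n) y (lbr (2*n+1) (heis_C n) z x)))
               (lbr (2*n+1) (heis_C n) z (lbr (2*n+1) (heis_C n) x y)) = zvec"
    unfolding lbr_heis oz by (simp add: zvec_def vadd_def)
qed

lemma brspan_heis_lo: "v \<in> brspan (2*n+1) (heis_C n) A B \<Longrightarrow> k < 2*n \<Longrightarrow> v k = 0"
  unfolding brspan_def lbr_heis by auto

lemma lcs2: "lcs d C 2 = brspan d C (vsp d) (lcs d C 1)" by (simp add: numeral_2_eq_2)

lemma lcs1: "lcs d C 1 = brspan d C (vsp d) (vsp d)" by simp

lemma nilp_heis: "nilpotent_la (2*n+1) (heis_C n)"
  unfolding nilpotent_la_def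
proof (rule exI[of _ 2])
  show "lcs (2*n+1) (heis_C n) 2 = {zvec}"
  proof
    show "lcs (2*n+1) (heis_C n) 2 \<subseteq> {zvec}"
    proof
      fix v assume "v \<in> lcs (2*n+1) (heis_C n) 2"
      then have "\<exists>(m::nat) xs ys. (\<forall>i<m. xs i \<in> vsp (2*n+1) \<and> ys i \<in> lcs (2*n+1) (heis_C n) 1) \<and>
          v = (\<lambda>k. \<Sum>i<m. lbr (2*n+1) (heis_C n) (xs i) (ys i) k)"
        unfolding lcs2 brspan_def mem_Collect_eq by blast
      then obtain m :: nat and xs ys where ys0: "\<forall>i<m. xs i \<in> vsp (2*n+1) \<and> ys i \<in> lcs (2*n+1) (heis_C n) 1"
        and v: "v = (\<lambda>k. \<Sum>i<m. lbr (2*n+1) (heis_C n) (xs i) (ys i) k)"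
        by blast
      from ys0 have ys: "\<forall>i<m. ys i \<in> lcs (2*n+1) (heis_C n) 1" by blast
      have "lbr (2*n+1) (heis_C n) (xs i) (ys i) = zvec" if "i < m" for i
      proof -
        have yi: "ys i \<in> brspan (2*n+1) (heis_C n) (vsp (2*n+1)) (vsp (2*n+1))"
          using ys that unfolding lcs1 by blast
        have "om n (xs i) (ys i) = 0"
          by (rule om_ge_r) (rule brspan_heis_lo[OF yi])
        then show ?thesis unfolding lbr_heis by (simp add: zvec_def fun_eq_iff)
      qed
      then show "v \<in> {zvec}" using v by (simp add: zvec_def)
    qed
  next
    have "zvec \<in> brspan (2*n+1) (heis_C n) (vsp (2*n+1)) (lcs (2*n+1) (heis_C n) 1)"
      unfolding brspan_def by (rule CollectI, rule exI[of _ 0]) (simp add: zvec_def)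
    then show "{zvec} \<subseteq> lcs (2*n+1) (heis_C n) 2" unfolding lcs2 by simp
  qed
qed

definition MH :: "nat \<Rightarrow> nat \<Rightarrow> nat \<Rightarrow> real" where
  "MH n k j = (if k = j then (if k < 2*n then - (real n + 1) / 2 else - (real n + 1)) else 0)"

lemma mat_MH_k: "mat_app (2*n+1) (MH n) x k = (if k < 2*n+1 then MH n k k * x k else 0)"
proof -
  have "(\<Sum>j<2*n+1. MH n k j * x j) = (\<Sum>j<2*n+1. if j = k then MH n k k * x k else 0)"
    by (rule sum.cong) (auto simp: MH_def)
  also have "\<dots> = (if k < 2*n+1 then MH n k k * x k else 0)"
    by (simp only: sum.delta finite_lessThan lessThan_iff)
  finally show ?thesis unfolding mat_app_def by simp
qed

lemma mat_MH: "mat_app (2*n+1) (MH n) x = (\<lambda>k. if k < 2*n then - (real n + 1) / 2 * x k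
   else if k = 2*n then - (real n + 1) * x k else 0)"
  by (rule ext, unfold mat_MH_k, simp add: MH_def)

lemma der_heis: "is_derivation (2*n+1) (heis_C n) (MH n)"
  unfolding is_derivation_def
proof (intro ballI)
  fix x y
  have a: "om n (mat_app (2*n+1) (MH n) x) y = - (real n + 1) / 2 * om n x y"
  proof -
    have "om n (mat_app (2*n+1) (MH n) x) y = om n (\<lambda>k. (- (real n + 1) / 2) * x k) y"
      by (rule om_cong) (unfold mat_MH, auto)
    then show ?thesis by (simp only: om_scale_l)
  qed
  have b: "om n x (mat_app (2*n+1) (MH n) y) = - (real n + 1) / 2 * om n x y"
  proof -
    have "om n x (mat_app (2*n+1) (MH n) y) = om n x (\<lambda>k. (- (real n + 1) / 2) * y k)"
      by (rule om_cong) (unfold mat_MH, auto)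
    then show ?thesis by (simp only: om_scale_r)
  qed
  show "mat_app (2*n+1) (MH n) (lbr (2*n+1) (heis_C n) x y) =
     vadd (lbr (2*n+1) (heis_C n) (mat_app (2*n+1) (MH n) x) y)
          (lbr (2*n+1) (heis_C n) x (mat_app (2*n+1) (MH n) y))"
    unfolding lbr_heis vadd_def a b unfolding mat_MH by (rule ext) (simp add: algebra_simps)
qed

lemma ricci_op_heis:
  assumes X: "X \<in> vsp (2*n+1)"
  shows "ricci_op (2*n+1) (heis_C n) (heis_g2 n) X =
    (\<lambda>k. if k < 2*n then X k / 2 else if k = 2*n then - (real n / 2) * X (2*n) else 0)"
  unfolding ricci_op_def
proof (rule the_bil_unique[OF pi_heis])
  show "(\<lambda>k. if k < 2*n then X k / 2 else if k = 2*n then - (real n / 2) * X (2*n) else 0) \<in> vsp (2*n+1)"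
    by (simp add: vsp_def)
  show "\<forall>Y\<in>vsp (2*n+1). bil (2*n+1) (heis_g2 n) (\<lambda>k. if k < 2*n then X k / 2 else if k = 2*n then - (real n / 2) * X (2*n) else 0) Y
     = ricci (2*n+1) (heis_C n) (heis_g2 n) X Y"
  proof
    fix Y assume Y: "Y \<in> vsp (2*n+1)"
    have "gV n (\<lambda>k. if k < 2*n then X k / 2 else if k = 2*n then - (real n / 2) * X (2*n) else 0) Y
       = gV n (\<lambda>k. (1/2) * X k) Y" by (rule gV_cong) auto
    also have "\<dots> = 1/2 * gV n X Y" by (simp only: gV_scale_l)
    finally show "bil (2*n+1) (heis_g2 n) (\<lambda>k. if k < 2*n then X k / 2 else if k = 2*n then - (real n / 2) * X (2*n) else 0) Y
     = ricci (2*n+1) (heis_C n) (heis_g2 n) X Y"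
      unfolding bil_heis ricci_heis[OF X Y] by simp
  qed
qed

theorem nilsoliton_heis: "nilsoliton (2*n+1) (heis_C n) (heis_g2 n)"
  unfolding nilsoliton_def algebraic_ricci_soliton_def
proof (intro conjI nilp_heis lie_heis pi_heis exI[of _ "(real n + 2) / 2"] exI[of _ "MH n"] der_heis ballI)
  fix X assume X: "X \<in> vsp (2*n+1)"
  show "ricci_op (2*n+1) (heis_C n) (heis_g2 n) X = (\<lambda>k. (real n + 2) / 2 * X k + mat_app (2*n+1) (MH n) X k)"
    unfolding ricci_op_heis[OF X] mat_MH
  proof (rule ext)
    fix k
    have "k > 2*n \<Longrightarrow> X k = 0" using X by (simp add: vsp_def)
    then show "(if k < 2*n then X k / 2 else if k = 2*n then - (real n / 2) * X (2*n) else 0) =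
      (real n + 2) / 2 * X k + (if k < 2*n then - (real n + 1) / 2 * X k
   else if k = 2*n then - (real n + 1) * X k else 0)"
      by (auto simp: field_simps)
  qed
qed


lemma "om n a b = 0 \<Longrightarrow> (\<lambda>k. if k = 2 * n then om n a b else 0) = (\<lambda>_. 0)"
  apply (rule ext) apply simp
  done
lemma "om n a b = 0 \<Longrightarrow> (\<lambda>k. if k = 2 * n then om n a b else 0) = (\<lambda>_. 0)"
  apply (simp add: fun_eq_iff)
  done


definition dc :: "nat \<Rightarrow> nat \<Rightarrow> real" where
  "dc n j = (if j < 2*n then 1/2 else if j = 2*n then 1 else 0)"
definition CE :: "nat \<Rightarrow> nat \<Rightarrow> nat \<Rightarrow> nat \<Rightarrow> real" where
  "CE n i j k = heis_C n i j k + (if i = 2*n+1 \<and> j = k then dc n j else 0)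
                 - (if j = 2*n+1 \<and> i = k then dc n i else 0)"
definition GE :: "nat \<Rightarrow> nat \<Rightarrow> nat \<Rightarrow> real" where
  "GE n i j = (if i = j \<and> i < 2*n then 1 else if i = j \<and> (i = 2*n \<or> i = 2*n+1) then -1 else 0)"
definition LE :: "nat \<Rightarrow> vec \<Rightarrow> vec \<Rightarrow> vec" where
  "LE n x y = (\<lambda>k. (if k = 2*n then om n x y else 0) + x (2*n+1) * dc n k * y k - y (2*n+1) * dc n k * x k)"

lemma dc_lo[simp]: "k < 2*n \<Longrightarrow> dc n k = 1/2" by (simp add: dc_def)
lemma dc_z[simp]: "dc n (2*n) = 1" by (simp add: dc_def)
lemma dc_ge[simp]: "2*n < k \<Longrightarrow> dc n k = 0" by (simp add: dc_def)
lemma dc_hi[simp]: "i < n \<Longrightarrow> dc n (i+n) = 1/2" by (simp add: dc_def)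

lemma sum_trunc: "m \<le> d \<Longrightarrow> (\<And>i. m \<le> i \<Longrightarrow> f i = 0) \<Longrightarrow> (\<Sum>i<d. f i) = (\<Sum>i<m. f i)"
  for f :: "nat \<Rightarrow> real"
  by (rule sum.mono_neutral_right) auto

lemma heis_sum:
  assumes "2*n \<le> d"
  shows "(\<Sum>i<d. \<Sum>j<d. x i * y j * heis_C n i j k) = (if k = 2*n then om n x y else 0)"
proof (cases "k = 2*n")
  case False
  then show ?thesis unfolding heis_C_def by auto
next
  case True
  have inner: "(\<Sum>j<d. x i * y j * heis_C n i j k) =
     (if i < n then x i * y (i+n) else 0) - (if n \<le> i \<and> i < 2*n then x i * y (i-n) else 0)" for i
  proof -
    have "(\<Sum>j<d. x i * y j * heis_C n i j k) =
      (\<Sum>j<d. (if j = i+n then (if i < n then x i * y (i+n) else 0) else 0)) -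
      (\<Sum>j<d. (if j = i-n then (if n \<le> i \<and> i < 2*n then x i * y (i-n) else 0) else 0))"
      unfolding sum_subtractf[symmetric] True heisC_z by (rule sum.cong) auto
    also have "\<dots> = (if i < n then x i * y (i+n) else 0) - (if n \<le> i \<and> i < 2*n then x i * y (i-n) else 0)"
      using assms by auto
    finally show ?thesis .
  qed
  have "(\<Sum>i<d. \<Sum>j<d. x i * y j * heis_C n i j k) = (\<Sum>i<d. (if i < n then x i * y (i+n) else 0) - (if n \<le> i \<and> i < 2*n then x i * y (i-n) else 0))"
    using inner by simp
  also have "\<dots> = (\<Sum>i<2*n. (if i < n then x i * y (i+n) else 0) - (if n \<le> i \<and> i < 2*n then x i * y (i-n) else 0))"
    by (rule sum_trunc[OF assms]) auto
  also have "\<dots> = om n x y" unfolding sum_split2 om_def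
    by (simp, (rule sum.cong, auto)?)
  finally show ?thesis using True by simp
qed

lemma lbr_ext: "lbr (2*n+2) (CE n) x y = (\<lambda>k. if k < 2*n+2 then LE n x y k else 0)"
proof (rule ext)
  fix k
  show "lbr (2*n+2) (CE n) x y k = (if k < 2*n+2 then LE n x y k else 0)"
  proof (cases "k < 2*n+2")
    case False then show ?thesis by (simp add: lbr_def)
  next
    case True
    have le2: "2*n \<le> 2*n+2" by simp
    have s1: "(\<Sum>j<2*n+2. x i * y j * (if i = 2*n+1 \<and> j = k then dc n j else 0)) =
       (if i = 2*n+1 then x i * y k * dc n k else 0)" for i
    proof -
      have "(\<Sum>j<2*n+2. x i * y j * (if i = 2*n+1 \<and> j = k then dc n j else 0)) =
        (\<Sum>j<2*n+2. if j = k then (if i = 2*n+1 then x i * y k * dc n k else 0) else 0)"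
        by (rule sum.cong) auto
      then show ?thesis using True by simp
    qed
    have s2: "(\<Sum>j<2*n+2. x i * y j * (if j = 2*n+1 \<and> i = k then dc n i else 0)) =
       (if i = k then x k * y (2*n+1) * dc n k else 0)" for i
    proof -
      have "(\<Sum>j<2*n+2. x i * y j * (if j = 2*n+1 \<and> i = k then dc n i else 0)) =
        (\<Sum>j<2*n+2. if j = 2*n+1 then (if i = k then x k * y (2*n+1) * dc n k else 0) else 0)"
        by (rule sum.cong) auto
      then show ?thesis by simp
    qed
    have "(\<Sum>i<2*n+2. \<Sum>j<2*n+2. x i * y j * CE n i j k) =
      (\<Sum>i<2*n+2. \<Sum>j<2*n+2. x i * y j * heis_C n i j k)
      + (\<Sum>i<2*n+2. \<Sum>j<2*n+2. x i * y j * (if i = 2*n+1 \<and> j = k then dc n j else 0))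
      - (\<Sum>i<2*n+2. \<Sum>j<2*n+2. x i * y j * (if j = 2*n+1 \<and> i = k then dc n i else 0))"
      unfolding CE_def by (simp add: algebra_simps sum.distrib sum_subtractf)
    also have "\<dots> = (if k = 2*n then om n x y else 0) + x (2*n+1) * y k * dc n k - x k * y (2*n+1) * dc n k"
      unfolding s1 s2 heis_sum[OF le2] using True by simp
    finally show ?thesis using True unfolding lbr_def LE_def by (simp add: algebra_simps)
  qed
qed

lemma GE_diag: "\<forall>i j. i \<noteq> j \<longrightarrow> GE n i j = 0" by (simp add: GE_def)

lemma bil_ext: "bil (2*n+2) (GE n) x y = gV n x y - x (2*n) * y (2*n) - x (2*n+1) * y (2*n+1)"
  unfolding bil_diag[OF GE_diag] sum_split22 gV_def GE_def
  by (simp, (rule sum.cong, auto)?)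

lemma pi_ext: "pseudo_inner (2*n+2) (GE n)"
  by (rule pseudo_inner_diag) (auto simp: GE_def)



definition gD :: "nat \<Rightarrow> vec \<Rightarrow> vec \<Rightarrow> real" where
  "gD n X Y = gV n X Y / 2 - X (2*n) * Y (2*n)"

definition NE :: "nat \<Rightarrow> vec \<Rightarrow> vec \<Rightarrow> vec" where
  "NE n X Y = (\<lambda>k. (if k = 2*n then om n X Y / 2 else 0)
     + (if k < 2*n then X (2*n) * Jm n Y k / 2 + Y (2*n) * Jm n X k / 2 else 0)
     - (if k = 2*n+1 then gD n X Y else 0) - Y (2*n+1) * dc n k * X k)"

lemma NE_app: "NE n X Y k = (if k = 2*n then om n X Y / 2 else 0)
     + (if k < 2*n then X (2*n) * Jm n Y k / 2 + Y (2*n) * Jm n X k / 2 else 0)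
     - (if k = 2*n+1 then gD n X Y else 0) - Y (2*n+1) * dc n k * X k"
  by (simp add: NE_def)

lemma NE_vsp: "NE n X Y \<in> vsp (2*n+2)"
  by (simp add: vsp_def NE_app)

lemma gV_lin3_l: "gV n (\<lambda>k. a * u k + b * v k + c * w k) y = a * gV n u y + b * gV n v y + c * gV n w y"
  unfolding gV_def by (simp add: sum_distrib_left sum.distrib[symmetric] algebra_simps)

lemma gV_lbr_ext: "gV n (lbr (2*n+2) (CE n) X Y) W = X (2*n+1) / 2 * gV n Y W + (- Y (2*n+1) / 2) * gV n X W"
proof -
  have "gV n (lbr (2*n+2) (CE n) X Y) W = gV n (\<lambda>k. X (2*n+1) / 2 * Y k + (- Y (2*n+1) / 2) * X k) W"
    unfolding lbr_ext LE_def by (rule gV_cong) auto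
  then show ?thesis by (simp only: gV_lin_l)
qed

lemma lbr_ext_z: "lbr (2*n+2) (CE n) X Y (2*n) = om n X Y + X (2*n+1) * Y (2*n) - Y (2*n+1) * X (2*n)"
  unfolding lbr_ext LE_def by simp
lemma lbr_ext_H: "lbr (2*n+2) (CE n) X Y (2*n+1) = 0"
  unfolding lbr_ext LE_def by simp

lemma gV_NE: "gV n (NE n X Y) W = X (2*n) / 2 * om n Y W + Y (2*n) / 2 * om n X W + (- Y (2*n+1) / 2) * gV n X W"
proof -
  have "gV n (NE n X Y) W = gV n (\<lambda>k. X (2*n) / 2 * Jm n Y k + Y (2*n) / 2 * Jm n X k + (- Y (2*n+1) / 2) * X k) W"
    by (rule gV_cong) (auto simp: NE_app)
  then show ?thesis by (simp only: gV_lin3_l gV_Jl)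
qed

lemma NE_z: "NE n X Y (2*n) = om n X Y / 2 - Y (2*n+1) * X (2*n)"
  by (simp add: NE_app)
lemma NE_H: "NE n X Y (2*n+1) = - gD n X Y"
  by (simp add: NE_app)

lemma koszul_ext:
  "2 * bil (2*n+2) (GE n) (NE n X Y) Z =
     bil (2*n+2) (GE n) (lbr (2*n+2) (CE n) X Y) Z -
     bil (2*n+2) (GE n) (lbr (2*n+2) (CE n) Y Z) X +
     bil (2*n+2) (GE n) (lbr (2*n+2) (CE n) Z X) Y"
  unfolding bil_ext gV_lbr_ext gV_NE lbr_ext_z lbr_ext_H NE_z NE_H gD_def
  using om_anti[of n Z X] om_anti[of n Z Y] om_anti[of n Y X] gV_sym[of n Z X] gV_sym[of n Z Y] gV_sym[of n Y X]
  by (simp add: algebra_simps)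

lemma nabla_ext:
  assumes "X \<in> vsp (2*n+2)" "Y \<in> vsp (2*n+2)"
  shows "nabla (2*n+2) (CE n) (GE n) X Y = NE n X Y"
  unfolding nabla_def
  by (rule the_bil_unique2[OF pi_ext NE_vsp], intro ballI, rule koszul_ext)



definition LF :: "nat \<Rightarrow> vec \<Rightarrow> vec \<Rightarrow> vec" where
  "LF n x y = (\<lambda>k. if k < 2*n+2 then LE n x y k else 0)"
lemma lbr_LF: "lbr (2*n+2) (CE n) x y = LF n x y" unfolding LF_def by (rule lbr_ext)
lemma LF_app: "LF n x y k = (if k < 2*n+2 then (if k = 2*n then om n x y else 0) + x (2*n+1) * dc n k * y k - y (2*n+1) * dc n k * x k else 0)"
  by (simp add: LF_def LE_def)

lemma gV_ev_lo: "i < n \<Longrightarrow> gV n (ev i) Y = Y i"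
proof -
  assume i: "i < n"
  have "gV n (ev i) Y = (\<Sum>j<n. if j = i then Y i else 0)"
    unfolding gV_def by (rule sum.cong) (use i in \<open>auto simp: ev_def\<close>)
  then show ?thesis using i by simp
qed
lemma gV_ev_hi: "i < n \<Longrightarrow> gV n (ev (i+n)) Y = Y (i+n)"
proof -
  assume i: "i < n"
  have "gV n (ev (i+n)) Y = (\<Sum>j<n. if j = i then Y (i+n) else 0)"
    unfolding gV_def by (rule sum.cong) (use i in \<open>auto simp: ev_def\<close>)
  then show ?thesis using i by simp
qed
lemma gV_ev_ge: "2*n \<le> k \<Longrightarrow> gV n (ev k) Y = 0"
  by (rule gV_zero_l) (simp add: ev_def)

lemma gD_ev_lo: "i < n \<Longrightarrow> gD n (ev i) Y = Y i / 2"
  by (simp add: gD_def gV_ev_lo)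
lemma gD_ev_hi: "i < n \<Longrightarrow> gD n (ev (i+n)) Y = Y (i+n) / 2"
  by (simp add: gD_def gV_ev_hi)
lemma gD_ev_z: "gD n (ev (2*n)) Y = - Y (2*n)"
  by (simp add: gD_def gV_ev_ge)
lemma gD_ev_H: "gD n (ev (2*n+1)) Y = 0"
  by (simp add: gD_def gV_ev_ge)

lemma om_NE_z: "om n X (NE n (ev (2*n)) Y) = gV n X Y / 2"
proof -
  have "om n X (NE n (ev (2*n)) Y) = om n X (\<lambda>k. (1/2) * Jm n Y k)"
    by (rule om_cong) (auto simp: NE_app Jm_def)
  also have "\<dots> = 1/2 * gV n X Y" by (subst om_scale_r) (simp add: om_Jr)
  finally show ?thesis by simp
qed
lemma gD_NE_H: "gD n X (NE n (ev (2*n+1)) Y) = 0"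
proof -
  have "gV n X (NE n (ev (2*n+1)) Y) = 0"
    by (subst gV_sym, rule gV_zero_l) (auto simp: NE_app Jm_def)
  moreover have "NE n (ev (2*n+1)) Y (2*n) = 0" by (simp add: NE_app om_ev_ge)
  ultimately show ?thesis by (simp add: gD_def)
qed
lemma om_LF_z: "om n (LF n (ev (2*n)) X) Y = 0"
  by (rule om_ge_l) (simp add: LF_app)
lemma gD_LF_H: "gD n (LF n (ev (2*n+1)) X) Y = gV n X Y / 4 - X (2*n) * Y (2*n)"
proof -
  have "gV n (LF n (ev (2*n+1)) X) Y = gV n (\<lambda>k. (1/2) * X k) Y"
    by (rule gV_cong) (auto simp: LF_app)
  also have "\<dots> = 1/2 * gV n X Y" by (simp only: gV_scale_l)
  finally have a: "gV n (LF n (ev (2*n+1)) X) Y = 1/2 * gV n X Y" .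
  have b: "LF n (ev (2*n+1)) X (2*n) = X (2*n)" by (simp add: LF_app om_ev_ge)
  show ?thesis unfolding gD_def a b by simp
qed

definition TE :: "nat \<Rightarrow> vec \<Rightarrow> vec \<Rightarrow> nat \<Rightarrow> real" where
  "TE n X Y k = NE n (ev k) (NE n X Y) k - NE n X (NE n (ev k) Y) k - NE n (LF n (ev k) X) Y k"

lemma gD_ev_HS: "gD n (ev (Suc (2*n))) Y = 0" using gD_ev_H by simp
lemma gD_NE_HS: "gD n X (NE n (ev (Suc (2*n))) Y) = 0" using gD_NE_H by simp
lemma gD_LF_HS: "gD n (LF n (ev (Suc (2*n))) X) Y = gV n X Y / 4 - X (2*n) * Y (2*n)" using gD_LF_H by simp

lemmas ev_simps = gD_ev_HS gD_NE_HS gD_LF_HS om_ev_lo om_ev_hi om_ev_ge gV_ev_lo gV_ev_hi gV_ev_ge gD_ev_lo gD_ev_hi gD_ev_z gD_ev_H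
  om_NE_z gD_NE_H om_LF_z gD_LF_H NE_app LF_app

lemma TE_lo: "i < n \<Longrightarrow> TE n X Y i = gD n X Y / 2 + (- X i * Y i / 4 + X (i+n) * Y (i+n) / 4 + X (2*n) * Y (2*n) / 4)
   + (X (i+n) * Y (i+n) / 2 - X (2*n+1) * Y (2*n+1) / 4)"
  unfolding TE_def by (simp add: ev_simps algebra_simps)
lemma TE_hi: "i < n \<Longrightarrow> TE n X Y (i+n) = gD n X Y / 2 + (X i * Y i / 4 - X (i+n) * Y (i+n) / 4 + X (2*n) * Y (2*n) / 4)
   + (X i * Y i / 2 - X (2*n+1) * Y (2*n+1) / 4)"
  unfolding TE_def by (simp add: ev_simps algebra_simps)
lemma TE_z: "TE n X Y (2*n) = gD n X Y - gV n X Y / 4 + X (2*n) * Y (2*n) - X (2*n+1) * Y (2*n+1)"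
  unfolding TE_def by (simp add: ev_simps, (simp add: algebra_simps)?)
lemma TE_H: "TE n X Y (2*n+1) = gV n X Y / 4 - X (2*n) * Y (2*n)"
  unfolding TE_def by (simp add: ev_simps, (simp add: algebra_simps)?)



lemma ricci_ext:
  assumes X: "X \<in> vsp (2*n+2)" and Y: "Y \<in> vsp (2*n+2)"
  shows "ricci (2*n+2) (CE n) (GE n) X Y = (real n + 2) / 2 * bil (2*n+2) (GE n) X Y"
proof -
  have "ricci (2*n+2) (CE n) (GE n) X Y = (\<Sum>k<2*n+2. TE n X Y k)"
    unfolding ricci_def
  proof (rule sum.cong[OF refl])
    fix k assume "k \<in> {..<2*n+2}"
    then have e: "ev k \<in> vsp (2*n+2)" by (simp add: ev_vsp)
    show "curv (2*n+2) (CE n) (GE n) (ev k) X Y k = TE n X Y k"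
      unfolding curv_def nabla_ext[OF X Y] nabla_ext[OF e NE_vsp] nabla_ext[OF e Y]
        nabla_ext[OF X NE_vsp] nabla_ext[OF lbr_vsp Y] unfolding lbr_LF TE_def ..
  qed
  also have "\<dots> = (\<Sum>i<n. TE n X Y i + TE n X Y (i+n)) + TE n X Y (2*n) + TE n X Y (2*n+1)"
    by (rule sum_split22)
  also have "\<dots> = (\<Sum>i<n. (gD n X Y + X (2*n) * Y (2*n) / 2 - X (2*n+1) * Y (2*n+1) / 2)
        + 1/2 * (X i * Y i + X (i+n) * Y (i+n)))
      + TE n X Y (2*n) + TE n X Y (2*n+1)"
    by (simp add: TE_lo TE_hi, rule sum.cong, auto simp: algebra_simps)
  also have "\<dots> = n * (gD n X Y + X (2*n) * Y (2*n) / 2 - X (2*n+1) * Y (2*n+1) / 2) + 1/2 * gV n X Y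
      + TE n X Y (2*n) + TE n X Y (2*n+1)"
    by (simp only: sum.distrib sum_constant card_lessThan sum_distrib_left[symmetric] gV_def)
  also have "\<dots> = (real n + 2) / 2 * bil (2*n+2) (GE n) X Y"
    unfolding TE_z TE_H bil_ext gD_def by (simp add: algebra_simps, simp add: field_simps)
  finally show ?thesis .
qed



lemma om_LF: "om n x (LF n y z) = y (2*n+1) / 2 * om n x z + (- z (2*n+1) / 2) * om n x y"
proof -
  have "om n x (LF n y z) = om n x (\<lambda>k. y (2*n+1) / 2 * z k + (- z (2*n+1) / 2) * y k)"
    by (rule om_cong) (auto simp: LF_app)
  then show ?thesis by (simp only: om_lin_r)
qed

lemma LF_H: "LF n y z (2*n+1) = 0" by (simp add: LF_app)

lemma lie_ext: "is_lie_algebra (2*n+2) (CE n)"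
  unfolding is_lie_algebra_def lbr_LF
proof (intro conjI ballI)
  fix x assume "x \<in> vsp (2*n+2)"
  show "LF n x x = zvec" by (rule ext) (simp add: LF_app zvec_def)
next
  fix x y z
  show "vadd (vadd (LF n x (LF n y z)) (LF n y (LF n z x))) (LF n z (LF n x y)) = zvec"
  proof (rule ext)
    fix k
    show "vadd (vadd (LF n x (LF n y z)) (LF n y (LF n z x))) (LF n z (LF n x y)) k = zvec k"
      unfolding vadd_def zvec_def
    proof -
      consider "k < 2*n" | "k = 2*n" | "k = 2*n+1" | "k > 2*n+1" by linarith
      then show "LF n x (LF n y z) k + LF n y (LF n z x) k + LF n z (LF n x y) k = 0"
      proof cases
        case 1 then show ?thesis by (simp add: LF_app algebra_simps)
      next
        case 2
        have "LF n x (LF n y z) (2*n) + LF n y (LF n z x) (2*n) + LF n z (LF n x y) (2*n) =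
          (y (2*n+1) / 2 * om n x z + (- z (2*n+1) / 2) * om n x y + x (2*n+1) * (om n y z + y (2*n+1) * z (2*n) - z (2*n+1) * y (2*n)))
        + (z (2*n+1) / 2 * om n y x + (- x (2*n+1) / 2) * om n y z + y (2*n+1) * (om n z x + z (2*n+1) * x (2*n) - x (2*n+1) * z (2*n)))
        + (x (2*n+1) / 2 * om n z y + (- y (2*n+1) / 2) * om n z x + z (2*n+1) * (om n x y + x (2*n+1) * y (2*n) - y (2*n+1) * x (2*n)))"
          unfolding LF_app[of n x "LF n y z"] LF_app[of n y "LF n z x"] LF_app[of n z "LF n x y"] om_LF
          by (simp add: LF_app)
        also have "\<dots> = 0"
          using om_anti[of n x z] om_anti[of n y x] om_anti[of n z y] by (simp add: algebra_simps)
        finally show ?thesis using 2 by simp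
      next
        case 3 then show ?thesis by (simp add: LF_app)
      next
        case 4 then show ?thesis by (simp add: LF_app)
      qed
    qed
  qed
qed

lemma brspan_zero:
  assumes "v \<in> brspan d C A B" "\<And>a b. a \<in> A \<Longrightarrow> b \<in> B \<Longrightarrow> lbr d C a b k = 0"
  shows "v k = 0"
proof -
  obtain m :: nat and xs ys where h: "\<forall>i<m. xs i \<in> A \<and> ys i \<in> B"
    and v: "v = (\<lambda>k. \<Sum>i<m. lbr d C (xs i) (ys i) k)"
    using assms(1) unfolding brspan_def by blast
  show ?thesis unfolding v using h assms(2) by (simp add: sum.neutral)
qed

lemma dsr1_ext: "v \<in> dsr (2*n+2) (CE n) 1 \<Longrightarrow> v (2*n+1) = 0 \<and> (\<forall>k\<ge>2*n+2. v k = 0)"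
proof -
  assume v: "v \<in> dsr (2*n+2) (CE n) 1"
  then have v': "v \<in> brspan (2*n+2) (CE n) (vsp (2*n+2)) (vsp (2*n+2))" by simp
  have "v (2*n+1) = 0" by (rule brspan_zero[OF v']) (unfold lbr_LF, simp add: LF_app)
  moreover have "\<forall>k\<ge>2*n+2. v k = 0"
  proof (intro allI impI)
    fix k :: nat assume "k \<ge> 2*n+2"
    then show "v k = 0" by (intro brspan_zero[OF v']) (unfold lbr_LF, simp add: LF_app)
  qed
  ultimately show ?thesis by blast
qed

lemma dsr2_ext: "v \<in> dsr (2*n+2) (CE n) 2 \<Longrightarrow> k \<noteq> 2*n \<Longrightarrow> v k = 0"
proof -
  assume v: "v \<in> dsr (2*n+2) (CE n) 2" and k: "k \<noteq> 2*n"
  have v': "v \<in> brspan (2*n+2) (CE n) (dsr (2*n+2) (CE n) 1) (dsr (2*n+2) (CE n) 1)"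
    using v by (simp add: numeral_2_eq_2)
  show ?thesis
  proof (rule brspan_zero[OF v'])
    fix a b assume a: "a \<in> dsr (2*n+2) (CE n) 1" and b: "b \<in> dsr (2*n+2) (CE n) 1"
    show "lbr (2*n+2) (CE n) a b k = 0"
      using dsr1_ext[OF a] dsr1_ext[OF b] k by (unfold lbr_LF, simp add: LF_app)
  qed
qed

lemma dsr3_ext: "dsr (2*n+2) (CE n) 3 = {zvec}"
proof
  show "dsr (2*n+2) (CE n) 3 \<subseteq> {zvec}"
  proof
    fix v assume v: "v \<in> dsr (2*n+2) (CE n) 3"
    have v': "v \<in> brspan (2*n+2) (CE n) (dsr (2*n+2) (CE n) 2) (dsr (2*n+2) (CE n) 2)"
      using v by (simp add: numeral_3_eq_3 numeral_2_eq_2)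
    have "v k = 0" for k
    proof (rule brspan_zero[OF v'])
      fix a b assume a: "a \<in> dsr (2*n+2) (CE n) 2" and b: "b \<in> dsr (2*n+2) (CE n) 2"
      have az: "\<And>j. j \<noteq> 2*n \<Longrightarrow> a j = 0" using dsr2_ext[OF a] by blast
      have bz: "\<And>j. j \<noteq> 2*n \<Longrightarrow> b j = 0" using dsr2_ext[OF b] by blast
      have "om n a b = 0" by (rule om_ge_l) (simp add: az)
      then show "lbr (2*n+2) (CE n) a b k = 0"
        using az[of "2*n+1"] bz[of "2*n+1"] by (unfold lbr_LF, simp add: LF_app)
    qed
    then show "v \<in> {zvec}" by (simp add: zvec_def fun_eq_iff)
  qed
next
  have "zvec \<in> brspan (2*n+2) (CE n) (dsr (2*n+2) (CE n) 2) (dsr (2*n+2) (CE n) 2)"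
    unfolding brspan_def by (rule CollectI, rule exI[of _ 0]) (simp add: zvec_def)
  then show "{zvec} \<subseteq> dsr (2*n+2) (CE n) 3" by (simp add: numeral_3_eq_3 numeral_2_eq_2)
qed

lemma solv_ext: "solvable_la (2*n+2) (CE n)"
  unfolding solvable_la_def using dsr3_ext by blast

lemma brspan_ext: "brspan (2*n+2) (CE n) (vsp (2*n+2)) (vsp (2*n+2)) = vsp (2*n+1)"
proof
  show "brspan (2*n+2) (CE n) (vsp (2*n+2)) (vsp (2*n+2)) \<subseteq> vsp (2*n+1)"
  proof
    fix v assume v: "v \<in> brspan (2*n+2) (CE n) (vsp (2*n+2)) (vsp (2*n+2))"
    have "v k = 0" if "k \<ge> 2*n+1" for k
      by (rule brspan_zero[OF v]) (use that in \<open>unfold lbr_LF, simp add: LF_app\<close>)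
    then show "v \<in> vsp (2*n+1)" by (simp add: vsp_def)
  qed
next
  show "vsp (2*n+1) \<subseteq> brspan (2*n+2) (CE n) (vsp (2*n+2)) (vsp (2*n+2))"
  proof
    fix v assume v: "v \<in> vsp (2*n+1)"
    define u where "u = (\<lambda>k. if k < 2*n then 2 * v k else if k = 2*n then v k else 0)"
    have u: "u \<in> vsp (2*n+2)" by (simp add: u_def vsp_def)
    have e: "ev (2*n+1) \<in> vsp (2*n+2)" by (simp add: ev_vsp)
    have "v = (\<lambda>k. LF n (ev (2*n+1)) u k)"
    proof (rule ext)
      fix k
      have "k \<ge> 2*n+1 \<Longrightarrow> v k = 0" using v by (simp add: vsp_def)
      then show "v k = LF n (ev (2*n+1)) u k"
        by (auto simp: LF_app u_def om_ev_ge)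
    qed
    then have vv: "v = (\<lambda>k. \<Sum>i<(1::nat). lbr (2*n+2) (CE n) ((\<lambda>_. ev (2*n+1)) i) ((\<lambda>_. u) i) k)"
      unfolding lbr_LF by (simp add: card_lessThan)
    show "v \<in> brspan (2*n+2) (CE n) (vsp (2*n+2)) (vsp (2*n+2))"
      unfolding brspan_def mem_Collect_eq
      by (rule exI[of _ 1], rule exI[of _ "\<lambda>_. ev (2*n+1)"], rule exI[of _ "\<lambda>_. u"]) (use u e vv in simp)
  qed
qed

lemma orth_ext: "{x \<in> vsp (2*n+2). \<forall>y\<in>{v \<in> vsp (2*n+2). \<forall>k<2*n+1. v k = 0}. bil (2*n+2) (GE n) x y = 0}
   = vsp (2*n+1)"
proof
  show "{x \<in> vsp (2*n+2). \<forall>y\<in>{v \<in> vsp (2*n+2). \<forall>k<2*n+1. v k = 0}. bil (2*n+2) (GE n) x y = 0}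
     \<subseteq> vsp (2*n+1)"
  proof
    fix x assume x: "x \<in> {x \<in> vsp (2*n+2). \<forall>y\<in>{v \<in> vsp (2*n+2). \<forall>k<2*n+1. v k = 0}. bil (2*n+2) (GE n) x y = 0}"
    have e: "ev (2*n+1) \<in> {v \<in> vsp (2*n+2). \<forall>k<2*n+1. v k = 0}" by (simp add: ev_vsp)
    then have "bil (2*n+2) (GE n) x (ev (2*n+1)) = 0" using x by blast
    moreover have "gV n x (ev (2*n+1)) = 0" by (subst gV_sym) (simp add: gV_ev_ge)
    ultimately have "x (2*n+1) = 0" unfolding bil_ext by simp
    moreover have "\<forall>k\<ge>2*n+2. x k = 0" using x by (simp add: vsp_def)
    ultimately have "\<forall>k\<ge>2*n+1. x k = 0"
      by (metis le_neq_implies_less Suc_eq_plus1 Suc_leI add_Suc_right one_add_one)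
    then show "x \<in> vsp (2*n+1)" unfolding vsp_def by blast
  qed
next
  show "vsp (2*n+1) \<subseteq> {x \<in> vsp (2*n+2). \<forall>y\<in>{v \<in> vsp (2*n+2). \<forall>k<2*n+1. v k = 0}. bil (2*n+2) (GE n) x y = 0}"
  proof
    fix x assume x: "x \<in> vsp (2*n+1)"
    have xH: "x (2*n+1) = 0" using x by (simp add: vsp_def)
    have "x \<in> vsp (2*n+2)" using x by (simp add: vsp_def)
    moreover have "bil (2*n+2) (GE n) x y = 0" if y: "y \<in> {v \<in> vsp (2*n+2). \<forall>k<2*n+1. v k = 0}" for y
    proof -
      have "gV n x y = 0" by (subst gV_sym, rule gV_zero_l) (use y in simp)
      moreover have "y (2*n) = 0" using y by simp
      ultimately show ?thesis unfolding bil_ext using xH by simp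
    qed
    ultimately show "x \<in> {x \<in> vsp (2*n+2). \<forall>y\<in>{v \<in> vsp (2*n+2). \<forall>k<2*n+1. v k = 0}. bil (2*n+2) (GE n) x y = 0}"
      by blast
  qed
qed

lemma lbr_restr: "x \<in> vsp (2*n+1) \<Longrightarrow> y \<in> vsp (2*n+1) \<Longrightarrow> lbr (2*n+2) (CE n) x y = lbr (2*n+1) (heis_C n) x y"
  unfolding lbr_LF lbr_heis by (rule ext) (simp add: LF_app vsp_def)

lemma bil_restr: "x \<in> vsp (2*n+1) \<Longrightarrow> y \<in> vsp (2*n+1) \<Longrightarrow> bil (2*n+2) (GE n) x y = bil (2*n+1) (heis_g2 n) x y"
  unfolding bil_ext bil_heis by (simp add: vsp_def)

theorem ext_main: "\<exists>m C' G'. metric_solvable_extension (2 * n + 1) (heis_C n) (heis_g2 n) m C' G' \<and>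
                     einstein (2 * n + 1 + m) C' G'"
proof (intro exI conjI)
  have eq: "2 * n + 1 + 1 = 2*n+2" by simp
  show "metric_solvable_extension (2 * n + 1) (heis_C n) (heis_g2 n) 1 (CE n) (GE n)"
    unfolding metric_solvable_extension_def eq
    using lie_ext solv_ext pi_ext brspan_ext orth_ext lbr_restr bil_restr by blast
  show "einstein (2 * n + 1 + 1) (CE n) (GE n)"
    unfolding einstein_def eq using ricci_ext by blast
qed


theorem mainTheorem2:
  fixes n :: nat
  assumes "1 \<le> n"
  shows "nilsoliton (2 * n + 1) (heis_C n) (heis_g2 n) \<and>
         (\<exists>m C' G'. metric_solvable_extension (2 * n + 1) (heis_C n) (heis_g2 n) m C' G' \<and>
                     einstein (2 * n + 1 + m) C' G')"
  using nilsoliton_heis ext_main by blast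

end
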